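(* Let $\Gamma_M$ ($M>0$) be a family of nonatomic routing games with a single OD pair with demand $M$, sharing the same graph, path set and edge costs $(c_e)_{e\in\mathcal E}$, where each $c_e$ is a polynomial. Then $\mathrm{PoA}(\Gamma_M)\to 1$ as $M\to 0$.
   Context: A nonatomic routing game with a single OD pair consists of a finite directed multigraph with edge set $\mathcal E$, a nonempty finite set $\mathcal P$ of paths from an origin to a destination, a demand $M>0$, and continuous nondecreasing edge costs $c_e:[0,\infty)\to[0,\infty)$. Feasible flows: $f\in\mathbb R_+^{\mathcal P}$ with $\sum_p f_p=M$; loads $x_e=\sum_{p\ni e}f_p$; path costs $c_p(f)=\sum_{e\in p}c_e(x_e)$. A Wardrop equilibrium is a feasible $f^*$ with $c_p(f^* )\le c_{p'}(f^* )$ whenever $f^*_p>0$. Social cost $L(x)=\sum_e x_ec_e(x_e)$; $\mathrm{Opt}$ is its minimum over feasible loads, $\mathrm{Eq}=L(x^* )$ at an equilibrium load, and $\mathrm{PoA}=\mathrm{Eq}/\mathrm{Opt}$; it is assumed that $\mathrm{Opt}>0$ (otherwise $\mathrm{PoA}:=1$). *)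

theory Defs
  imports "HOL-Computational_Algebra.Polynomial" "HOL-Analysis.Analysis"
begin

text \<open>A single-OD nonatomic routing game: a finite edge set E, a finite nonempty
  path set P, each path p described by its set of edges pe p (a subset of E),
  edge cost functions c e, and a demand M.\<close>

definition feasible_flow :: "'p set \<Rightarrow> real \<Rightarrow> ('p \<Rightarrow> real) \<Rightarrow> bool" where
  "feasible_flow P M f \<longleftrightarrow> (\<forall>p\<in>P. f p \<ge> 0) \<and> (\<Sum>p\<in>P. f p) = M"

definition edge_load :: "'p set \<Rightarrow> ('p \<Rightarrow> 'e set) \<Rightarrow> ('p \<Rightarrow> real) \<Rightarrow> 'e \<Rightarrow> real" where
  "edge_load P pe f e = (\<Sum>p\<in>{p\<in>P. e \<in> pe p}. f p)"

definition path_cost ::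
  "'p set \<Rightarrow> ('p \<Rightarrow> 'e set) \<Rightarrow> ('e \<Rightarrow> real \<Rightarrow> real) \<Rightarrow> ('p \<Rightarrow> real) \<Rightarrow> 'p \<Rightarrow> real" where
  "path_cost P pe c f p = (\<Sum>e\<in>pe p. c e (edge_load P pe f e))"

definition wardrop_eq ::
  "'p set \<Rightarrow> ('p \<Rightarrow> 'e set) \<Rightarrow> ('e \<Rightarrow> real \<Rightarrow> real) \<Rightarrow> real \<Rightarrow> ('p \<Rightarrow> real) \<Rightarrow> bool" where
  "wardrop_eq P pe c M f \<longleftrightarrow> feasible_flow P M f \<and>
     (\<forall>p\<in>P. \<forall>q\<in>P. f p > 0 \<longrightarrow> path_cost P pe c f p \<le> path_cost P pe c f q)"

definition social_cost ::
  "'e set \<Rightarrow> 'p set \<Rightarrow> ('p \<Rightarrow> 'e set) \<Rightarrow> ('e \<Rightarrow> real \<Rightarrow> real) \<Rightarrow> ('p \<Rightarrow> real) \<Rightarrow> real" where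
  "social_cost E P pe c f = (\<Sum>e\<in>E. edge_load P pe f e * c e (edge_load P pe f e))"

definition opt_cost ::
  "'e set \<Rightarrow> 'p set \<Rightarrow> ('p \<Rightarrow> 'e set) \<Rightarrow> ('e \<Rightarrow> real \<Rightarrow> real) \<Rightarrow> real \<Rightarrow> real" where
  "opt_cost E P pe c M = (INF f\<in>{f. feasible_flow P M f}. social_cost E P pe c f)"

definition poa ::
  "'e set \<Rightarrow> 'p set \<Rightarrow> ('p \<Rightarrow> 'e set) \<Rightarrow> ('e \<Rightarrow> real \<Rightarrow> real) \<Rightarrow> real \<Rightarrow> ('p \<Rightarrow> real) \<Rightarrow> real" where
  "poa E P pe c M f = (if opt_cost E P pe c M = 0 then 1
                       else social_cost E P pe c f / opt_cost E P pe c M)"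

end

theory Submission
  imports Defs
begin

lemma poly_bdd01:
  fixes r :: "real poly"
  shows "\<exists>K\<ge>0. \<forall>x. 0 \<le> x \<and> x \<le> 1 \<longrightarrow> \<bar>poly r x\<bar> \<le> K"
proof -
  have "compact ((\<lambda>x. poly r x) ` {0..1::real})"
    by (intro compact_continuous_image continuous_intros) auto
  then obtain B where B: "\<forall>y\<in>(\<lambda>x. poly r x) ` {0..1}. norm y \<le> B"
    using compact_imp_bounded bounded_iff by metis
  show ?thesis
    apply (rule exI[of _ "max 0 B"]) using B by force
qed

lemma poly_local:
  fixes p :: "real poly"
  assumes "p \<noteq> 0" and nn: "\<forall>x\<ge>0. poly p x \<ge> 0"
  shows "\<exists>k b K. b > 0 \<and> K \<ge> 0 \<and>
     (\<forall>x. 0 \<le> x \<and> x \<le> 1 \<longrightarrow> \<bar>poly p x - b * x ^ k\<bar> \<le> K * x ^ (k+1))"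
proof -
  obtain q where pq: "p = [:- 0, 1:] ^ order 0 p * q" and nd: "\<not> [:- 0, 1:] dvd q"
    using order_decomp[OF assms(1)] by blast
  define k where "k = order 0 p"
  obtain b r where qbr: "q = pCons b r" by (cases q) auto
  have b0: "b \<noteq> 0" using nd unfolding qbr by (simp add: dvd_iff_poly_eq_0)
  obtain K where K: "K \<ge> 0" "\<forall>x. 0 \<le> x \<and> x \<le> 1 \<longrightarrow> \<bar>poly r x\<bar> \<le> K"
    using poly_bdd01 by blast
  have pe: "poly p x = x ^ k * (b + x * poly r x)" for x
  proof -
    have "poly p x = poly ([:- 0, 1:] ^ k * q) x" using pq k_def by metis
    also have "\<dots> = x ^ k * (b + x * poly r x)" by (simp add: qbr poly_power algebra_simps)
    finally show ?thesis .
  qed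
  have est: "\<bar>poly p x - b * x ^ k\<bar> \<le> K * x ^ (k+1)" if "0 \<le> x" "x \<le> 1" for x
  proof -
    have "\<bar>poly p x - b * x ^ k\<bar> = x ^ k * x * \<bar>poly r x\<bar>"
      using that by (simp add: pe algebra_simps abs_mult)
    also have "\<dots> \<le> x ^ k * x * K"
      using K that by (intro mult_left_mono) auto
    finally show ?thesis by (simp add: algebra_simps)
  qed
  have "b > 0"
  proof (rule ccontr)
    assume "\<not> b > 0"
    with b0 have bn: "b < 0" by simp
    define x where "x = min (1/2) (- b / (2 * (K + 1)))"
    have x0: "0 < x" "x \<le> 1" using bn K unfolding x_def by (auto simp: divide_neg_pos)
    have "x * K \<le> (- b / (2 * (K + 1))) * K"
      using K unfolding x_def by (intro mult_right_mono) auto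
    also have "\<dots> < - b" using bn K mult_nonneg_nonpos[of K b] by (simp add: field_simps)
    finally have xk: "x * K < - b" .
    have "b + x * poly r x \<le> b + x * K"
    proof -
      have "poly r x \<le> K" using K(2) x0 by (meson abs_le_D1 less_imp_le)
      thus ?thesis using x0 by (simp add: mult_left_mono)
    qed
    also have "\<dots> < 0" using xk by (simp add: algebra_simps)
    finally have "poly p x < 0" using x0 unfolding pe by (simp add: mult_pos_neg)
    moreover have "0 \<le> poly p x" using nn x0(1) by simp
    ultimately show False by linarith
  qed
  with K est show ?thesis by blast
qed

lemma load_swap:
  assumes "finite E" "finite P" "\<forall>p\<in>P. pe p \<subseteq> E"
  shows "(\<Sum>e\<in>E. edge_load P pe g e * h e) = (\<Sum>p\<in>P. g p * (\<Sum>e\<in>pe p. h e))"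
proof -
  have "(\<Sum>e\<in>E. edge_load P pe g e * h e) = (\<Sum>e\<in>E. \<Sum>p\<in>P. if e \<in> pe p then g p * h e else 0)"
  proof (rule sum.cong[OF refl])
    fix e
    have "edge_load P pe g e * h e = (\<Sum>p\<in>P. (if e \<in> pe p then g p else 0)) * h e"
      unfolding edge_load_def using sum.inter_filter[OF assms(2)] by metis
    also have "\<dots> = (\<Sum>p\<in>P. (if e \<in> pe p then g p else 0) * h e)"
      by (rule sum_distrib_right)
    also have "\<dots> = (\<Sum>p\<in>P. if e \<in> pe p then g p * h e else 0)"
      by (rule sum.cong) auto
    finally show "edge_load P pe g e * h e = (\<Sum>p\<in>P. if e \<in> pe p then g p * h e else 0)" .
  qed
  also have "\<dots> = (\<Sum>p\<in>P. \<Sum>e\<in>E. if e \<in> pe p then g p * h e else 0)"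
    by (rule sum.swap)
  also have "\<dots> = (\<Sum>p\<in>P. g p * (\<Sum>e\<in>pe p. h e))"
  proof (rule sum.cong[OF refl])
    fix p assume "p \<in> P"
    hence "{e\<in>E. e \<in> pe p} = pe p" using assms by auto
    hence "(\<Sum>e\<in>E. if e \<in> pe p then g p * h e else 0) = (\<Sum>e\<in>pe p. g p * h e)"
      using assms(1) by (simp add: sum.inter_filter[symmetric])
    thus "(\<Sum>e\<in>E. if e \<in> pe p then g p * h e else 0) = g p * (\<Sum>e\<in>pe p. h e)"
      by (simp add: sum_distrib_left)
  qed
  finally show ?thesis .
qed

lemma load_nonneg:
  assumes "feasible_flow P M g" shows "0 \<le> edge_load P pe g e"
  using assms unfolding feasible_flow_def edge_load_def by (auto intro: sum_nonneg)

lemma load_le: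
  assumes "feasible_flow P M g" "finite P" shows "edge_load P pe g e \<le> M"
proof -
  have "edge_load P pe g e \<le> (\<Sum>p\<in>P. g p)"
    unfolding edge_load_def using assms unfolding feasible_flow_def
    by (intro sum_mono2) auto
  thus ?thesis using assms unfolding feasible_flow_def by simp
qed

lemma sc_nonneg:
  assumes "feasible_flow P M g" "\<forall>e\<in>E. \<forall>x\<ge>0. c e x \<ge> 0"
  shows "0 \<le> social_cost E P pe c g"
proof -
  have l: "\<forall>e. 0 \<le> edge_load P pe g e" using load_nonneg assms(1) by metis
  show ?thesis unfolding social_cost_def using assms l
    by (intro sum_nonneg mult_nonneg_nonneg) auto
qed

lemma poa_close:
  assumes "feasible_flow P M f" "\<forall>e\<in>E. \<forall>x\<ge>0. c e x \<ge> 0"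
    and "finite P" "P \<noteq> {}" "M \<ge> 0"
    and bnd: "\<forall>g. feasible_flow P M g \<longrightarrow> social_cost E P pe c f \<le> (1 + r) * social_cost E P pe c g"
    and "0 \<le> r" "r < \<epsilon>"
  shows "\<bar>poa E P pe c M f - 1\<bar> < \<epsilon>"
proof -
  let ?S = "{g. feasible_flow P M g}"
  let ?F = "\<lambda>g. social_cost E P pe c g"
  have ne: "?S \<noteq> {}" using assms(1) by auto
  have bdd: "bdd_below (?F ` ?S)"
    using sc_nonneg[OF _ assms(2)] by (intro bdd_belowI[of _ 0]) auto
  have o0: "0 \<le> opt_cost E P pe c M"
    unfolding opt_cost_def using ne sc_nonneg[OF _ assms(2)] by (intro cINF_greatest) auto
  have o1: "opt_cost E P pe c M \<le> ?F f"
    unfolding opt_cost_def using assms(1) bdd by (intro cINF_lower) auto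
  have o2: "?F f / (1 + r) \<le> opt_cost E P pe c M"
    unfolding opt_cost_def using ne
  proof (intro cINF_greatest)
    fix g assume "g \<in> ?S"
    thus "?F f / (1 + r) \<le> ?F g" using bnd assms(7) by (simp add: divide_le_eq mult.commute)
  qed auto
  show ?thesis
  proof (cases "opt_cost E P pe c M = 0")
    case True thus ?thesis unfolding poa_def using assms by simp
  next
    case False
    hence op: "opt_cost E P pe c M > 0" using o0 by simp
    have "?F f \<le> (1 + r) * opt_cost E P pe c M" using o2 assms(7) by (simp add: divide_le_eq mult.commute)
    hence u: "?F f / opt_cost E P pe c M \<le> 1 + r" using op by (simp add: divide_le_eq)
    have l: "1 \<le> ?F f / opt_cost E P pe c M" using op o1 by simp
    show ?thesis unfolding poa_def using False u l assms by simp
  qed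
qed

lemma sc_paths:
  assumes "finite E" "finite P" "\<forall>p\<in>P. pe p \<subseteq> E"
  shows "social_cost E P pe c f = (\<Sum>p\<in>P. f p * path_cost P pe c f p)"
  unfolding social_cost_def path_cost_def by (rule load_swap[OF assms])

lemma bern:
  fixes x y :: real
  assumes "0 \<le> x" "0 \<le> y"
  shows "real (Suc n) * x ^ n * (y - x) \<le> y ^ Suc n - x ^ Suc n"
proof -
  have eq: "y ^ Suc n - x ^ Suc n = (y - x) * (\<Sum>p<Suc n. y ^ p * x ^ (n - p))"
    by (rule diff_power_eq_sum)
  show ?thesis
  proof (cases "x \<le> y")
    case True
    have "(\<Sum>p<Suc n. x ^ n) \<le> (\<Sum>p<Suc n. y ^ p * x ^ (n - p))"
    proof (rule sum_mono)
      fix p assume "p \<in> {..<Suc n}"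
      hence "x ^ n = x ^ p * x ^ (n - p)" by (simp add: power_add[symmetric])
      also have "\<dots> \<le> y ^ p * x ^ (n - p)"
        using True assms by (intro mult_right_mono power_mono) auto
      finally show "x ^ n \<le> y ^ p * x ^ (n - p)" .
    qed
    hence "(y - x) * (real (Suc n) * x ^ n) \<le> (y - x) * (\<Sum>p<Suc n. y ^ p * x ^ (n - p))"
      using True by (intro mult_left_mono) auto
    thus ?thesis unfolding eq by (simp add: algebra_simps)
  next
    case False
    have "(\<Sum>p<Suc n. y ^ p * x ^ (n - p)) \<le> (\<Sum>p<Suc n. x ^ n)"
    proof (rule sum_mono)
      fix p assume "p \<in> {..<Suc n}"
      have "y ^ p * x ^ (n - p) \<le> x ^ p * x ^ (n - p)"
        using False assms by (intro mult_right_mono power_mono) auto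
      also have "\<dots> = x ^ n" using \<open>p \<in> {..<Suc n}\<close> by (simp add: power_add[symmetric])
      finally show "y ^ p * x ^ (n - p) \<le> x ^ n" .
    qed
    hence "(y - x) * (real (Suc n) * x ^ n) \<le> (y - x) * (\<Sum>p<Suc n. y ^ p * x ^ (n - p))"
      using False by (intro mult_left_mono_neg) auto
    thus ?thesis unfolding eq by (simp add: algebra_simps)
  qed
qed

lemma small_aux:
  fixes M \<eta> bm U2 z :: real
  assumes "j < D" "0 < M" "M \<le> 1" "0 < \<eta>" "0 < bm" "0 < U2"
    and "M * 2 * U2 < bm * \<eta> ^ j" and "bm / 2 * z ^ j \<le> U2 * M ^ D" and "0 \<le> z"
  shows "z \<le> \<eta> * M"
proof (rule ccontr)
  assume "\<not> z \<le> \<eta> * M"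
  hence zz: "\<eta> * M < z" by simp
  have "(\<eta> * M) ^ j \<le> z ^ j" using zz assms by (intro power_mono) auto
  hence "bm / 2 * (\<eta> ^ j * M ^ j) \<le> bm / 2 * z ^ j" using assms by (simp add: power_mult_distrib)
  also have "\<dots> \<le> U2 * M ^ D" by fact
  also have "U2 * M ^ D \<le> U2 * M ^ (Suc j)"
    using assms by (intro mult_left_mono power_decreasing) auto
  finally have "bm / 2 * \<eta> ^ j * M ^ j \<le> (U2 * M) * M ^ j" by (simp add: algebra_simps)
  hence "bm / 2 * \<eta> ^ j \<le> U2 * M" using assms by (simp add: mult_le_cancel_right)
  thus False using assms by (simp add: algebra_simps)
qed

lemma main_case:
  fixes E :: "'e set" and P :: "'p set" and pe :: "'p \<Rightarrow> 'e set"
    and c :: "'e \<Rightarrow> real \<Rightarrow> real" and kk :: "'e \<Rightarrow> nat" and bb KK :: "'e \<Rightarrow> real"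
  assumes finE: "finite E" and finP: "finite P" and Pne: "P \<noteq> {}" and peE: "\<forall>p\<in>P. pe p \<subseteq> E"
    and cnn: "\<forall>e\<in>E. \<forall>x\<ge>0. c e x \<ge> 0"
    and cmono: "\<forall>e\<in>E. \<forall>x y. 0 \<le> x \<and> x \<le> y \<longrightarrow> c e x \<le> c e y"
    and ZE: "Z \<subseteq> E" and Z0: "\<forall>e\<in>Z. \<forall>x. c e x = 0"
    and loc: "\<forall>e\<in>E-Z. bb e > 0 \<and> KK e \<ge> 0 \<and>
        (\<forall>x. 0 \<le> x \<and> x \<le> 1 \<longrightarrow> \<bar>c e x - bb e * x ^ kk e\<bar> \<le> KK e * x ^ (kk e + 1))"
    and ps: "ps \<in> P" and psd: "\<forall>e\<in>pe ps - Z. d \<le> kk e"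
    and allp: "\<forall>p\<in>P. \<exists>e\<in>pe p - Z. kk e \<le> d"
    and eps: "\<epsilon> > 0"
  shows "\<exists>\<delta>>0. \<forall>M f. 0 < M \<and> M < \<delta> \<and> wardrop_eq P pe c M f \<longrightarrow>
            \<bar>poa E P pe c M f - 1\<bar> < \<epsilon>"
proof -
  define N where "N = real (card E)"
  define n where "n = real (card P)"
  define U where "U = (\<Sum>e\<in>E-Z. bb e + KK e)"
  define bm where "bm = Min (bb ` (E-Z))"
  define U2 where "U2 = N * U"
  define c0 where "c0 = bm / (2 * n ^ d)"
  define \<rho> where "\<rho> = min (1/2) (\<epsilon>/4)"
  define \<theta> where "\<theta> = \<rho> * c0"
  define A where "A = N * U2 + N * N * U * (real d + 1) * (1 + N) ^ d"
  define B where "B = (real d + 3) * N * U"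
  define \<eta> where "\<eta> = min 1 (\<theta> / (2 * A + 1))"
  define \<delta> where "\<delta> = min (min (1 / (1 + N)) (bm * \<eta> ^ d / (2 * U2))) (min (bm / (2 * U)) (\<theta> / (2 * B)))"
  obtain p0 where p0: "p0 \<in> P" using Pne by blast
  then obtain e0 where e0: "e0 \<in> pe p0 - Z" using allp by blast
  have e0E: "e0 \<in> E - Z" using e0 p0 peE by auto
  have finEZ: "finite (E - Z)" using finE by simp
  have bmpos: "bm > 0" unfolding bm_def using e0E finEZ loc by (subst Min_gr_iff) auto
  have bmle: "bm \<le> bb e" if "e \<in> E - Z" for e
    unfolding bm_def using that finEZ by (intro Min_le) auto
  have bKU: "bb e + KK e \<le> U" if "e \<in> E - Z" for e
    unfolding U_def using that finEZ loc
    by (intro member_le_sum[where f = "\<lambda>e. bb e + KK e"]) (auto intro: add_nonneg_nonneg less_imp_le)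
  have Upos: "U > 0" using bKU[OF e0E] loc e0E by force
  have KU: "KK e \<le> U" if "e \<in> E - Z" for e using bKU[OF that] loc that by force
  have cardE: "card E \<ge> 1" using e0E finE by (metis DiffD1 card_0_eq empty_iff less_one not_le)
  have N1: "N \<ge> 1" unfolding N_def using cardE by simp
  have cardP: "card P \<ge> 1" using Pne finP by (simp add: Suc_leI card_gt_0_iff)
  have n1: "n \<ge> 1" unfolding n_def using cardP by simp
  have U2pos: "U2 > 0" unfolding U2_def using N1 Upos by simp
  have c0pos: "c0 > 0" unfolding c0_def using bmpos n1 by simp
  have rpos: "\<rho> > 0" "\<rho> \<le> 1/2" "2 * \<rho> < \<epsilon>" unfolding \<rho>_def using eps by auto
  have thpos: "\<theta> > 0" unfolding \<theta>_def using rpos c0pos by simp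
  have Apos: "A \<ge> 0" unfolding A_def using N1 Upos U2pos by simp
  have Bpos: "B > 0" unfolding B_def using N1 Upos by simp
  have etapos: "\<eta> > 0" "\<eta> \<le> 1" unfolding \<eta>_def using thpos Apos by auto
  have Aeta: "A * \<eta> \<le> \<theta> / 2"
  proof -
    have "A * \<eta> \<le> A * (\<theta> / (2 * A + 1))" unfolding \<eta>_def using Apos by (intro mult_left_mono) auto
    also have "\<dots> \<le> \<theta> / 2" using Apos thpos by (simp add: field_simps)
    finally show ?thesis .
  qed
  have dpos: "\<delta> > 0" unfolding \<delta>_def using N1 bmpos etapos U2pos Upos thpos Bpos by auto
  show ?thesis
  proof (intro exI[of _ \<delta>] conjI allI impI dpos)
    fix M f assume Mf: "0 < M \<and> M < \<delta> \<and> wardrop_eq P pe c M f"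
    hence M0: "0 < M" and Md: "M < \<delta>" and weq: "wardrop_eq P pe c M f" by auto
    have ff: "feasible_flow P M f" using weq unfolding wardrop_eq_def by simp
    have wq: "\<forall>p\<in>P. \<forall>q\<in>P. f p > 0 \<longrightarrow> path_cost P pe c f p \<le> path_cost P pe c f q"
      using weq unfolding wardrop_eq_def by simp
    have MN: "M * (1 + N) \<le> 1" using Md N1 unfolding \<delta>_def by (simp add: field_simps)
    hence M1: "M \<le> 1" using N1 M0 by (smt (verit) mult_le_cancel_left1)
    have Meta: "M * 2 * U2 < bm * \<eta> ^ d" using Md U2pos unfolding \<delta>_def by (simp add: field_simps)
    have MU: "U * M < bm / 2" using Md Upos unfolding \<delta>_def by (simp add: field_simps)
    have MB: "B * M < \<theta> / 2" using Md Bpos unfolding \<delta>_def by (simp add: field_simps)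
    have up: "c e z \<le> U * z ^ kk e" if "e \<in> E - Z" "0 \<le> z" "z \<le> 1" for e z
    proof -
      have "\<bar>c e z - bb e * z ^ kk e\<bar> \<le> KK e * z ^ (kk e + 1)" using loc that by blast
      moreover have "KK e * z ^ (kk e + 1) \<le> KK e * z ^ kk e"
        using loc that by (intro mult_left_mono power_decreasing) auto
      moreover have "(bb e + KK e) * z ^ kk e \<le> U * z ^ kk e"
        using bKU[OF that(1)] that by (intro mult_right_mono) auto
      ultimately show ?thesis by (simp add: algebra_simps abs_le_iff)
    qed
    have rr: "\<bar>c e z - bb e * z ^ kk e\<bar> \<le> U * z ^ (kk e + 1)" if "e \<in> E - Z" "0 \<le> z" "z \<le> 1" for e z
    proof -
      have "\<bar>c e z - bb e * z ^ kk e\<bar> \<le> KK e * z ^ (kk e + 1)" using loc that by blast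
      also have "\<dots> \<le> U * z ^ (kk e + 1)"
      proof -
        have "KK e \<le> U" using bKU[OF that(1)] loc that(1) by force
        thus ?thesis using that by (intro mult_right_mono) auto
      qed
      finally show ?thesis .
    qed
    have lo: "bm / 2 * z ^ kk e \<le> c e z" if "e \<in> E - Z" "0 \<le> z" "z \<le> M" for e z
    proof -
      have a: "\<bar>c e z - bb e * z ^ kk e\<bar> \<le> KK e * z ^ (kk e + 1)" using loc that M1 by auto
      have "KK e * z \<le> U * M" using KU[OF that(1)] Upos loc that
        by (intro mult_mono) auto
      hence "KK e * z \<le> bb e - bm / 2" using MU bmle[OF that(1)] by linarith
      hence "z ^ kk e * (bm / 2) \<le> z ^ kk e * (bb e - KK e * z)"
        using that by (intro mult_left_mono) auto
      thus ?thesis using a by (simp add: algebra_simps abs_le_iff)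
    qed
    have bbU: "bb e \<le> U" if "e \<in> E - Z" for e using bKU[OF that] loc that by force
    define x where "x = edge_load P pe f"
    have x0: "0 \<le> x e" for e unfolding x_def using load_nonneg[OF ff] by metis
    have cx0: "0 \<le> c e (x e)" if "e \<in> E" for e using cnn x0 that by blast
    have xM: "x e \<le> M" for e unfolding x_def using load_le[OF ff finP] by metis
    have fnn: "\<forall>p\<in>P. f p \<ge> 0" and fsum: "(\<Sum>p\<in>P. f p) = M" using ff unfolding feasible_flow_def by auto
    obtain p1 where p1: "p1 \<in> P" "f p1 \<ge> M / n"
    proof (rule ccontr)
      assume "\<not> thesis"
      hence lt: "\<forall>p\<in>P. f p < M / n" using that by force
      have "(\<Sum>p\<in>P. f p) < (\<Sum>p\<in>P. M / n)" using lt Pne finP by (intro sum_strict_mono) auto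
      also have "\<dots> = M" unfolding n_def using cardP by simp
      finally show False using fsum by simp
    qed
    have fp1: "f p1 > 0" using p1 M0 n1 by (smt (verit) divide_pos_pos)
    define \<Lambda> where "\<Lambda> = path_cost P pe c f p1"
    have Lge: "\<Lambda> \<le> path_cost P pe c f p" if "p \<in> P" for p
      unfolding \<Lambda>_def using wq fp1 p1 that by blast
    have Lused: "path_cost P pe c f p = \<Lambda>" if "p \<in> P" "f p > 0" for p
      using Lge[OF that(1)] wq that p1 unfolding \<Lambda>_def by (meson order_antisym)
    have pc_eq: "path_cost P pe c f p = (\<Sum>e\<in>pe p. c e (x e))" for p
      unfolding path_cost_def x_def by simp
    have finpe: "finite (pe p)" if "p \<in> P" for p using peE that finE by (meson rev_finite_subset)
    have SCf: "social_cost E P pe c f = M * \<Lambda>"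
    proof -
      have "social_cost E P pe c f = (\<Sum>p\<in>P. f p * path_cost P pe c f p)"
        by (rule sc_paths[OF finE finP peE])
      also have "\<dots> = (\<Sum>p\<in>P. f p * \<Lambda>)"
      proof (rule sum.cong[OF refl])
        fix p assume "p \<in> P"
        thus "f p * path_cost P pe c f p = f p * \<Lambda>"
          using Lused fnn by (cases "f p > 0") (auto simp: less_le)
      qed
      also have "\<dots> = M * \<Lambda>" using fsum by (simp add: sum_distrib_right[symmetric])
      finally show ?thesis .
    qed
    have cle: "c e (x e) \<le> \<Lambda>" if "e \<in> E" "x e > 0" for e
    proof -
      obtain p where p: "p \<in> P" "e \<in> pe p" "f p > 0"
      proof (rule ccontr)
        assume "\<not> thesis"
        hence "\<forall>p\<in>{p\<in>P. e \<in> pe p}. f p = 0" using that fnn by force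
        hence "x e = 0" unfolding x_def edge_load_def by simp
        thus False using \<open>x e > 0\<close> by simp
      qed
      have "c e (x e) \<le> (\<Sum>e\<in>pe p. c e (x e))"
        using finpe[OF p(1)] p peE by (intro member_le_sum) (auto intro!: cx0)
      thus ?thesis using Lused[OF p(1) p(3)] pc_eq by simp
    qed
    have Lup: "\<Lambda> \<le> U2 * M ^ d"
    proof -
      have "\<Lambda> \<le> (\<Sum>e\<in>pe ps. c e (x e))" using Lge[OF ps] pc_eq by simp
      also have "\<dots> \<le> (\<Sum>e\<in>pe ps. U * M ^ d)"
      proof (rule sum_mono)
        fix e assume e: "e \<in> pe ps"
        show "c e (x e) \<le> U * M ^ d"
        proof (cases "e \<in> Z")
          case True thus ?thesis using Z0 Upos M0 by simp
        next
          case False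
          hence eEZ: "e \<in> E - Z" using e ps peE by auto
          have "c e (x e) \<le> U * x e ^ kk e" using up[OF eEZ x0] xM M1 by (meson order_trans)
          also have "\<dots> \<le> U * M ^ kk e" using Upos x0 xM by (intro mult_left_mono power_mono) auto
          also have "\<dots> \<le> U * M ^ d" using Upos M0 M1 psd e False
            by (intro mult_left_mono power_decreasing) auto
          finally show ?thesis .
        qed
      qed
      also have "\<dots> = real (card (pe ps)) * (U * M ^ d)" by simp
      also have "\<dots> \<le> N * (U * M ^ d)" unfolding N_def using ps peE finE Upos M0
        by (intro mult_right_mono) (auto intro: card_mono)
      finally show ?thesis unfolding U2_def by (simp add: algebra_simps)
    qed
    have Llo: "c0 * M ^ d \<le> \<Lambda>"
    proof -
      obtain e1 where e1: "e1 \<in> pe p1 - Z" "kk e1 \<le> d" using allp p1 by blast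
      have e1E: "e1 \<in> E - Z" using e1 p1 peE by auto
      have "f p1 \<le> x e1" unfolding x_def edge_load_def using finP p1 e1 fnn
        by (intro member_le_sum) auto
      hence xe1: "M / n \<le> x e1" using p1 by simp
      have Mn1: "M / n \<le> 1" using M1 n1 M0 by (simp add: divide_le_eq) 
      have "c0 * M ^ d = bm / 2 * (M / n) ^ d" unfolding c0_def by (simp add: power_divide)
      also have "\<dots> \<le> bm / 2 * (M / n) ^ kk e1" using bmpos M0 n1 Mn1 e1
        by (intro mult_left_mono power_decreasing) auto
      also have "\<dots> \<le> bm / 2 * x e1 ^ kk e1" using bmpos M0 n1 xe1
        by (intro mult_left_mono power_mono) auto
      also have "\<dots> \<le> c e1 (x e1)" using lo[OF e1E x0[of e1] xM[of e1]] .
      also have "\<dots> \<le> (\<Sum>e\<in>pe p1. c e (x e))"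
        using finpe[OF p1(1)] e1 p1 peE by (intro member_le_sum) (auto intro!: cx0)
      finally show ?thesis unfolding \<Lambda>_def pc_eq .
    qed
    have xbad: "x e \<le> \<eta> * M" if "e \<in> E - Z" "kk e < d" for e
    proof (cases "x e = 0")
      case True thus ?thesis using etapos M0 by simp
    next
      case False
      hence "x e > 0" using x0 by (simp add: less_le)
      hence "c e (x e) \<le> \<Lambda>" using cle that by blast
      hence h: "bm / 2 * x e ^ kk e \<le> U2 * M ^ d" using lo[OF that(1) x0[of e] xM[of e]] Lup by linarith
      have "bm * \<eta> ^ d \<le> bm * \<eta> ^ kk e" using bmpos etapos that
        by (intro mult_left_mono power_decreasing) auto
      hence "M * 2 * U2 < bm * \<eta> ^ kk e" using Meta by linarith
      thus ?thesis using small_aux[OF that(2) M0 M1 etapos(1) bmpos U2pos _ h x0] by blast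
    qed
    show "\<bar>poa E P pe c M f - 1\<bar> < \<epsilon>"
    proof (rule poa_close[OF ff cnn finP Pne _ _ _ rpos(3)])
      show "0 \<le> M" using M0 by simp
      show "0 \<le> 2 * \<rho>" using rpos by simp
      show "\<forall>g. feasible_flow P M g \<longrightarrow>
          social_cost E P pe c f \<le> (1 + 2 * \<rho>) * social_cost E P pe c g"
      proof (intro allI impI)
        fix g assume fg: "feasible_flow P M g"
        define Sf where "Sf = social_cost E P pe c f"
        define Sg where "Sg = social_cost E P pe c g"
        have Sg0: "0 \<le> Sg" unfolding Sg_def using sc_nonneg[OF fg cnn] .
        have Sf0: "0 \<le> Sf" unfolding Sf_def using sc_nonneg[OF ff cnn] .
        define Q where "Q = M ^ (d + 1)"
        have QM: "Q = M * M ^ d" unfolding Q_def by simp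
        have Q0: "0 \<le> Q" unfolding Q_def using M0 by simp
        have SfQ: "c0 * Q \<le> Sf"
        proof -
          have "M * (c0 * M ^ d) \<le> M * \<Lambda>" using Llo M0 by (intro mult_left_mono) auto
          thus ?thesis unfolding Sf_def SCf QM by (simp add: algebra_simps)
        qed
        have SfU: "Sf \<le> U2 * Q"
        proof -
          have "M * \<Lambda> \<le> M * (U2 * M ^ d)" using Lup M0 by (intro mult_left_mono) auto
          thus ?thesis unfolding Sf_def SCf QM by (simp add: algebra_simps)
        qed
        have "Sf \<le> (1 + 2 * \<rho>) * Sg"
        proof (cases "Sf \<le> Sg")
          case True
          have "0 \<le> 2 * \<rho> * Sg" using rpos Sg0 by simp
          thus ?thesis using True by (simp add: algebra_simps)
        next
          case False
          hence lt: "Sg < Sf" by simp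
          define y where "y = edge_load P pe g"
          have y0: "0 \<le> y e" for e unfolding y_def using load_nonneg[OF fg] by metis
          have yM: "y e \<le> M" for e unfolding y_def using load_le[OF fg finP] by metis
          have cy0: "0 \<le> c e (y e)" if "e \<in> E" for e using cnn y0 that by blast
          have gnn: "\<forall>p\<in>P. g p \<ge> 0" and gsum: "(\<Sum>p\<in>P. g p) = M"
            using fg unfolding feasible_flow_def by auto
          have Sgy: "Sg = (\<Sum>e\<in>E. y e * c e (y e))" unfolding Sg_def social_cost_def y_def ..
          have Sfx: "Sf = (\<Sum>e\<in>E. x e * c e (x e))" unfolding Sf_def social_cost_def x_def ..
          have ycy: "y e * c e (y e) \<le> Sg" if "e \<in> E" for e
            unfolding Sgy using finE that y0 cy0 by (intro member_le_sum mult_nonneg_nonneg) auto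
          have ybad: "y e \<le> \<eta> * M" if "e \<in> E - Z" "kk e < d" for e
          proof -
            have "bm / 2 * y e ^ (kk e + 1) = y e * (bm / 2 * y e ^ kk e)" by (simp add: algebra_simps)
            also have "\<dots> \<le> y e * c e (y e)"
              using lo[OF that(1) y0[of e] yM[of e]] y0[of e] by (intro mult_left_mono) auto
            also have "\<dots> \<le> Sg" using ycy that by simp
            also have "\<dots> \<le> U2 * M ^ (d + 1)" using lt SfU unfolding Q_def by simp
            finally have h: "bm / 2 * y e ^ (kk e + 1) \<le> U2 * M ^ (d + 1)" .
            have "bm * \<eta> ^ d \<le> bm * \<eta> ^ (kk e + 1)" using bmpos etapos that
              by (intro mult_left_mono power_decreasing) auto
            hence m: "M * 2 * U2 < bm * \<eta> ^ (kk e + 1)" using Meta by linarith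
            have kd: "kk e + 1 < d + 1" using that by simp
            show ?thesis using small_aux[OF kd M0 M1 etapos(1) bmpos U2pos m h y0] .
          qed
          define bad where "bad p \<longleftrightarrow> (\<exists>e\<in>pe p - Z. kk e < d)" for p
          have psnb: "\<not> bad ps" unfolding bad_def using psd by force
          define t where "t = (\<Sum>p\<in>P. if bad p then g p else 0)"
          have t0: "0 \<le> t" unfolding t_def using gnn by (intro sum_nonneg) auto
          define ind where "ind e = (if e \<in> E - Z \<and> kk e < d then 1 else (0::real))" for e
          have tle: "t \<le> N * \<eta> * M"
          proof -
            have sw: "(\<Sum>e\<in>E. y e * ind e) = (\<Sum>p\<in>P. g p * (\<Sum>e\<in>pe p. ind e))"
              unfolding y_def by (rule load_swap[OF finE finP peE])
            have "t \<le> (\<Sum>p\<in>P. g p * (\<Sum>e\<in>pe p. ind e))"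
              unfolding t_def
            proof (rule sum_mono)
              fix p assume pP: "p \<in> P"
              have s0: "0 \<le> (\<Sum>e\<in>pe p. ind e)" unfolding ind_def by (intro sum_nonneg) auto
              show "(if bad p then g p else 0) \<le> g p * (\<Sum>e\<in>pe p. ind e)"
              proof (cases "bad p")
                case True
                then obtain e where e: "e \<in> pe p - Z" "kk e < d" unfolding bad_def by blast
                have "ind e \<le> (\<Sum>e\<in>pe p. ind e)"
                  using finpe[OF pP] e by (intro member_le_sum) (auto simp: ind_def)
                moreover have "ind e = 1" unfolding ind_def using e pP peE by auto
                ultimately have "g p * 1 \<le> g p * (\<Sum>e\<in>pe p. ind e)"
                  using gnn pP by (intro mult_left_mono) auto
                thus ?thesis using True by simp
              next
                case False
                have "0 \<le> g p * (\<Sum>e\<in>pe p. ind e)" using gnn pP s0 by simp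
                thus ?thesis using False by simp
              qed
            qed
            also have "\<dots> = (\<Sum>e\<in>E. y e * ind e)" using sw by simp
            also have "\<dots> \<le> (\<Sum>e\<in>E. \<eta> * M)"
            proof (rule sum_mono)
              fix e assume "e \<in> E"
              show "y e * ind e \<le> \<eta> * M"
                using ybad[of e] etapos M0 unfolding ind_def by auto
            qed
            also have "\<dots> = N * \<eta> * M" unfolding N_def by simp
            finally show ?thesis .
          qed
          define g' where "g' p = (if bad p then 0 else g p) + (if p = ps then t else 0)" for p
          have g'nn: "\<forall>p\<in>P. g' p \<ge> 0" unfolding g'_def using gnn t0 by auto
          have g'sum: "(\<Sum>p\<in>P. g' p) = M"
          proof -
            have "(\<Sum>p\<in>P. g' p) = (\<Sum>p\<in>P. if bad p then 0 else g p) + (\<Sum>p\<in>P. if p = ps then t else 0)"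
              unfolding g'_def by (rule sum.distrib)
            also have "(\<Sum>p\<in>P. if p = ps then t else 0) = t" using ps finP by simp
            also have "(\<Sum>p\<in>P. if bad p then 0 else g p) + t = (\<Sum>p\<in>P. g p)"
              unfolding t_def by (subst sum.distrib[symmetric]) (rule sum.cong, auto)
            finally show ?thesis using gsum by simp
          qed
          have fg': "feasible_flow P M g'" unfolding feasible_flow_def using g'nn g'sum by simp
          define y' where "y' = edge_load P pe g'"
          have y'0: "0 \<le> y' e" for e unfolding y'_def using load_nonneg[OF fg'] by metis
          have y'M: "y' e \<le> M" for e unfolding y'_def using load_le[OF fg' finP] by metis
          have y'le: "y' e \<le> y e + t" for e
          proof -
            let ?S = "{p\<in>P. e \<in> pe p}"
            have finS: "finite ?S" using finP by simp
            have "y' e \<le> (\<Sum>p\<in>?S. g p + (if p = ps then t else 0))"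
              unfolding y'_def edge_load_def g'_def using gnn by (intro sum_mono) auto
            also have "\<dots> = y e + (\<Sum>p\<in>?S. if p = ps then t else 0)"
              unfolding y_def edge_load_def by (simp add: sum.distrib)
            finally have a: "y' e \<le> y e + (\<Sum>p\<in>?S. if p = ps then t else 0)" .
            have "(\<Sum>p\<in>?S. if p = ps then t else 0) \<le> t" using finS t0 by simp
            thus ?thesis using a by linarith
          qed
          have y'bad: "y' e = 0" if "e \<in> E - Z" "kk e < d" for e
            unfolding y'_def edge_load_def
          proof (rule sum.neutral, rule ballI)
            fix p assume "p \<in> {p\<in>P. e \<in> pe p}"
            hence bp: "bad p" unfolding bad_def using that by blast
            hence "p \<noteq> ps" using psnb by blast
            thus "g' p = 0" unfolding g'_def using bp by simp
          qed
          have VI: "M * \<Lambda> \<le> (\<Sum>e\<in>E. y' e * c e (x e))"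
          proof -
            have "(\<Sum>e\<in>E. y' e * c e (x e)) = (\<Sum>p\<in>P. g' p * path_cost P pe c f p)"
              unfolding y'_def x_def path_cost_def by (rule load_swap[OF finE finP peE])
            moreover have "(\<Sum>p\<in>P. g' p * \<Lambda>) \<le> (\<Sum>p\<in>P. g' p * path_cost P pe c f p)"
              using Lge g'nn by (intro sum_mono mult_left_mono) auto
            moreover have "(\<Sum>p\<in>P. g' p * \<Lambda>) = M * \<Lambda>"
              using g'sum by (simp add: sum_distrib_right[symmetric])
            ultimately show ?thesis by simp
          qed
          have VI2: "0 \<le> (\<Sum>e\<in>E. c e (x e) * (y' e - x e))"
          proof -
            have "(\<Sum>e\<in>E. c e (x e) * (y' e - x e)) = (\<Sum>e\<in>E. y' e * c e (x e)) - (\<Sum>e\<in>E. x e * c e (x e))"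
              by (simp add: sum_subtractf[symmetric] algebra_simps)
            thus ?thesis using VI SCf Sfx unfolding Sf_def by simp
          qed
          define D where "D e \<longleftrightarrow> e \<notin> Z \<and> kk e = d" for e
          define SD where "SD z = (\<Sum>e\<in>E. if D e then bb e * z e ^ (d + 1) else 0)" for z :: "'e \<Rightarrow> real"
          have xQ: "x e ^ (d + 1) \<le> Q" for e unfolding Q_def using x0 xM by (intro power_mono) auto
          have yQ: "y e ^ (d + 1) \<le> Q" for e unfolding Q_def using y0 yM by (intro power_mono) auto
          have trm: "(real d + 1) * (c e (x e) * (y' e - x e)) \<le>
              (if D e then bb e * (y' e ^ (d + 1) - x e ^ (d + 1)) else 0) + (real d + 1) * (U * M * Q)"
            if eE: "e \<in> E" for e
          proof (cases "e \<in> Z")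
            case True
            have "0 \<le> (real d + 1) * (U * M * Q)" using Upos M0 Q0 by simp
            thus ?thesis using True Z0 unfolding D_def by simp
          next
            case False
            hence eEZ: "e \<in> E - Z" using eE by simp
            have rhs0: "0 \<le> (real d + 1) * (U * M * Q)" using Upos M0 Q0 by simp
            consider "kk e < d" | "kk e = d" | "kk e > d" by linarith
            then show ?thesis
            proof cases
              case 1
              have "c e (x e) * (y' e - x e) \<le> 0"
                using y'bad[OF eEZ 1] cx0[OF eE] x0[of e] by (simp add: mult_nonneg_nonneg)
              hence h: "(real d + 1) * (c e (x e) * (y' e - x e)) \<le> 0"
                by (simp add: mult_nonneg_nonpos)
              have nd: "(if D e then bb e * (y' e ^ (d + 1) - x e ^ (d + 1)) else 0) = 0"
                using 1 unfolding D_def by simp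
              show ?thesis using h nd rhs0 by linarith
            next
              case 2
              hence De: "D e" unfolding D_def using False by simp
              have b: "real (Suc d) * x e ^ d * (y' e - x e) \<le> y' e ^ Suc d - x e ^ Suc d"
                by (rule bern[OF x0 y'0])
              have b2: "bb e * ((real d + 1) * x e ^ d * (y' e - x e)) \<le> bb e * (y' e ^ (d + 1) - x e ^ (d + 1))"
              proof -
                have b': "(real d + 1) * x e ^ d * (y' e - x e) \<le> y' e ^ (d + 1) - x e ^ (d + 1)"
                  using b by (simp add: add.commute)
                have bb0: "0 \<le> bb e" using loc eEZ by (meson less_imp_le)
                show ?thesis by (rule mult_left_mono[OF b' bb0])
              qed
              have r: "\<bar>c e (x e) - bb e * x e ^ d\<bar> \<le> U * x e ^ (d + 1)"
                using rr[OF eEZ x0[of e]] xM[of e] M1 2 by auto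
              have r2: "U * x e ^ (d + 1) \<le> U * Q" using xQ[of e] Upos by (intro mult_left_mono) auto
              have ad: "\<bar>y' e - x e\<bar> \<le> M" using x0[of e] xM[of e] y'0[of e] y'M[of e] by linarith
              have "\<bar>(c e (x e) - bb e * x e ^ d) * (y' e - x e)\<bar> \<le> (U * Q) * M"
              proof -
                have r4: "\<bar>c e (x e) - bb e * x e ^ d\<bar> \<le> U * Q" using r r2 by linarith
                show ?thesis unfolding abs_mult using r4 ad Upos Q0 by (intro mult_mono) auto
              qed
              hence r3: "(c e (x e) - bb e * x e ^ d) * (y' e - x e) \<le> U * M * Q" by (simp add: algebra_simps)
              have "(real d + 1) * (c e (x e) * (y' e - x e)) =
                  bb e * ((real d + 1) * x e ^ d * (y' e - x e)) + (real d + 1) * ((c e (x e) - bb e * x e ^ d) * (y' e - x e))"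
                by (simp add: algebra_simps)
              also have "\<dots> \<le> bb e * (y' e ^ (d + 1) - x e ^ (d + 1)) + (real d + 1) * (U * M * Q)"
              proof -
                have r5: "(real d + 1) * ((c e (x e) - bb e * x e ^ d) * (y' e - x e)) \<le> (real d + 1) * (U * M * Q)"
                  using r3 by (intro mult_left_mono) auto
                show ?thesis by (rule add_mono[OF b2 r5])
              qed
              finally show ?thesis using De by simp
            next
              case 3
              have "c e (x e) * (y' e - x e) \<le> c e (x e) * y' e"
                using cx0[OF eE] x0[of e] by (simp add: algebra_simps mult_nonneg_nonneg)
              also have "\<dots> \<le> (U * Q) * M"
              proof (rule mult_mono)
                have "c e (x e) \<le> U * x e ^ kk e" using up[OF eEZ x0[of e]] xM[of e] M1 by auto
                also have "\<dots> \<le> U * M ^ kk e" using Upos x0[of e] xM[of e] by (intro mult_left_mono power_mono) auto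
                also have "\<dots> \<le> U * Q" unfolding Q_def using Upos M0 M1 3
                  by (intro mult_left_mono power_decreasing) auto
                finally show "c e (x e) \<le> U * Q" .
              qed (use y'M Upos Q0 y'0 in auto)
              finally have "c e (x e) * (y' e - x e) \<le> U * M * Q" by (simp add: algebra_simps)
              hence "(real d + 1) * (c e (x e) * (y' e - x e)) \<le> (real d + 1) * (U * M * Q)"
                by (intro mult_left_mono) auto
              thus ?thesis using 3 unfolding D_def by simp
            qed
          qed
          have E1: "SD x \<le> SD y' + N * ((real d + 1) * (U * M * Q))"
          proof -
            have "0 \<le> (real d + 1) * (\<Sum>e\<in>E. c e (x e) * (y' e - x e))" using VI2 by simp
            also have "\<dots> = (\<Sum>e\<in>E. (real d + 1) * (c e (x e) * (y' e - x e)))" by (simp add: sum_distrib_left)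
            also have "\<dots> \<le> (\<Sum>e\<in>E. (if D e then bb e * (y' e ^ (d + 1) - x e ^ (d + 1)) else 0) + (real d + 1) * (U * M * Q))"
              using trm by (intro sum_mono) auto
            also have "\<dots> = (\<Sum>e\<in>E. (if D e then bb e * (y' e ^ (d + 1) - x e ^ (d + 1)) else 0)) + N * ((real d + 1) * (U * M * Q))"
              unfolding N_def by (simp add: sum.distrib)
            also have "(\<Sum>e\<in>E. (if D e then bb e * (y' e ^ (d + 1) - x e ^ (d + 1)) else 0)) = SD y' - SD x"
              unfolding SD_def sum_subtractf[symmetric] by (rule sum.cong) (auto simp: algebra_simps)
            finally show ?thesis by simp
          qed
          have SCx: "Sf \<le> SD x + N * (U2 * \<eta> * Q + U * M * Q)"
          proof -
            have "Sf \<le> (\<Sum>e\<in>E. (if D e then bb e * x e ^ (d + 1) else 0) + (U2 * \<eta> * Q + U * M * Q))"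
              unfolding Sfx
            proof (rule sum_mono)
              fix e assume eE: "e \<in> E"
              have err0: "0 \<le> U2 * \<eta> * Q" "0 \<le> U * M * Q" using U2pos etapos Upos M0 Q0 by auto
              show "x e * c e (x e) \<le> (if D e then bb e * x e ^ (d + 1) else 0) + (U2 * \<eta> * Q + U * M * Q)"
              proof (cases "e \<in> Z")
                case True thus ?thesis using Z0 err0 unfolding D_def by simp
              next
                case False
                hence eEZ: "e \<in> E - Z" using eE by simp
                consider "kk e < d" | "kk e = d" | "kk e > d" by linarith
                then show ?thesis
                proof cases
                  case 1
                  have "x e * c e (x e) \<le> (\<eta> * M) * (U2 * M ^ d)"
                  proof (cases "x e = 0")
                    case True thus ?thesis using etapos M0 U2pos by simp
                  next
                    case False
                    hence "c e (x e) \<le> \<Lambda>" using cle eE x0[of e] by (simp add: less_le)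
                    thus ?thesis using xbad[OF eEZ 1] Lup x0[of e] cx0[OF eE] etapos M0
                      by (intro mult_mono) auto
                  qed
                  also have "\<dots> = U2 * \<eta> * Q" unfolding QM by (simp add: algebra_simps)
                  finally show ?thesis using 1 err0 unfolding D_def by simp
                next
                  case 2
                  hence De: "D e" unfolding D_def using False by simp
                  have r: "\<bar>c e (x e) - bb e * x e ^ d\<bar> \<le> U * x e ^ (d + 1)"
                    using rr[OF eEZ x0[of e]] xM[of e] M1 2 by auto
                  hence "x e * c e (x e) \<le> x e * (bb e * x e ^ d + U * x e ^ (d + 1))"
                    using x0[of e] by (intro mult_left_mono) (auto simp: abs_le_iff)
                  also have "\<dots> = bb e * x e ^ (d + 1) + U * (x e * x e ^ (d + 1))" by (simp add: algebra_simps)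
                  also have "\<dots> \<le> bb e * x e ^ (d + 1) + U * (M * Q)"
                    using Upos x0[of e] xM[of e] xQ[of e] by (intro add_left_mono mult_left_mono mult_mono) auto
                  finally show ?thesis using De err0 by (simp add: algebra_simps)
                next
                  case 3
                  have "c e (x e) \<le> U * x e ^ kk e" using up[OF eEZ x0[of e]] xM[of e] M1 by auto
                  also have "\<dots> \<le> U * M ^ kk e" using Upos x0[of e] xM[of e] by (intro mult_left_mono power_mono) auto
                  also have "\<dots> \<le> U * Q" unfolding Q_def using Upos M0 M1 3
                    by (intro mult_left_mono power_decreasing) auto
                  finally have "x e * c e (x e) \<le> M * (U * Q)"
                    using x0[of e] xM[of e] cx0[OF eE] by (intro mult_mono) auto
                  thus ?thesis using 3 err0 unfolding D_def by (simp add: algebra_simps)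
                qed
              qed
            qed
            also have "\<dots> = SD x + N * (U2 * \<eta> * Q + U * M * Q)"
              unfolding SD_def N_def by (simp add: sum.distrib)
            finally show ?thesis .
          qed
          have E2: "SD y' \<le> SD y + N * (U * (real d + 1) * (N * \<eta> * M) * ((1 + N) ^ d * M ^ d))"
          proof -
            have "SD y' \<le> (\<Sum>e\<in>E. (if D e then bb e * y e ^ (d + 1) else 0) + U * (real d + 1) * (N * \<eta> * M) * ((1 + N) ^ d * M ^ d))"
              unfolding SD_def
            proof (rule sum_mono)
              fix e assume eE: "e \<in> E"
              have Ne: "N * \<eta> * M \<le> N * 1 * M" using etapos N1 M0 by (intro mult_right_mono mult_left_mono) auto
              have yt: "y e + t \<le> (1 + N) * M" using yM[of e] tle Ne by (simp add: algebra_simps)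
              have err0: "0 \<le> U * (real d + 1) * (N * \<eta> * M) * ((1 + N) ^ d * M ^ d)"
                using Upos N1 etapos M0 by simp
              show "(if D e then bb e * y' e ^ (d + 1) else 0) \<le> (if D e then bb e * y e ^ (d + 1) else 0) + U * (real d + 1) * (N * \<eta> * M) * ((1 + N) ^ d * M ^ d)"
              proof (cases "D e")
                case False thus ?thesis using err0 by simp
              next
                case True
                hence eEZ: "e \<in> E - Z" using eE unfolding D_def by simp
                have bb0: "0 \<le> bb e" using loc eEZ by (meson less_imp_le)
                have h1: "y' e ^ (d + 1) \<le> (y e + t) ^ (d + 1)" using y'0[of e] y'le[of e] by (intro power_mono) auto
                have h2: "(y e + t) ^ (d + 1) \<le> y e ^ (d + 1) + (real d + 1) * (y e + t) ^ d * t"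
                  using bern[of "y e + t" "y e" d] y0[of e] t0 by (simp add: algebra_simps)
                have h3: "(y e + t) ^ d \<le> (1 + N) ^ d * M ^ d"
                proof -
                  have "(y e + t) ^ d \<le> ((1 + N) * M) ^ d" using yt y0[of e] t0 by (intro power_mono) auto
                  thus ?thesis by (simp add: power_mult_distrib)
                qed
                have h4: "(real d + 1) * (y e + t) ^ d * t \<le> (real d + 1) * ((1 + N) ^ d * M ^ d) * (N * \<eta> * M)"
                  using h3 tle t0 y0[of e] N1 M0 by (intro mult_mono mult_left_mono) auto
                have h: "y' e ^ (d + 1) \<le> y e ^ (d + 1) + (real d + 1) * ((1 + N) ^ d * M ^ d) * (N * \<eta> * M)"
                  using h1 h2 h4 by linarith
                have "bb e * y' e ^ (d + 1) \<le> bb e * (y e ^ (d + 1) + (real d + 1) * ((1 + N) ^ d * M ^ d) * (N * \<eta> * M))"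
                  using h bb0 by (intro mult_left_mono) auto
                also have "\<dots> = bb e * y e ^ (d + 1) + bb e * ((real d + 1) * ((1 + N) ^ d * M ^ d) * (N * \<eta> * M))"
                  by (simp add: algebra_simps)
                also have "\<dots> \<le> bb e * y e ^ (d + 1) + U * ((real d + 1) * ((1 + N) ^ d * M ^ d) * (N * \<eta> * M))"
                proof -
                  have "0 \<le> (real d + 1) * ((1 + N) ^ d * M ^ d) * (N * \<eta> * M)" using N1 M0 etapos by simp
                  thus ?thesis using bbU[OF eEZ] by (intro add_left_mono mult_right_mono) auto
                qed
                finally show ?thesis using True by (simp add: algebra_simps)
              qed
            qed
            also have "\<dots> = SD y + N * (U * (real d + 1) * (N * \<eta> * M) * ((1 + N) ^ d * M ^ d))"
              unfolding SD_def N_def by (simp add: sum.distrib)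
            finally show ?thesis .
          qed
          have E3: "SD y \<le> Sg + N * (U * M * Q)"
          proof -
            have "SD y \<le> (\<Sum>e\<in>E. y e * c e (y e) + U * M * Q)"
              unfolding SD_def
            proof (rule sum_mono)
              fix e assume eE: "e \<in> E"
              have err0: "0 \<le> U * M * Q" using Upos M0 Q0 by simp
              have yc0: "0 \<le> y e * c e (y e)" using y0[of e] cy0[OF eE] by simp
              show "(if D e then bb e * y e ^ (d + 1) else 0) \<le> y e * c e (y e) + U * M * Q"
              proof (cases "D e")
                case False thus ?thesis using err0 yc0 by simp
              next
                case True
                hence eEZ: "e \<in> E - Z" and kd: "kk e = d" using eE unfolding D_def by auto
                have r: "\<bar>c e (y e) - bb e * y e ^ d\<bar> \<le> U * y e ^ (d + 1)"
                  using rr[OF eEZ y0[of e]] yM[of e] M1 kd by auto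
                hence "y e * (bb e * y e ^ d - U * y e ^ (d + 1)) \<le> y e * c e (y e)"
                  using y0[of e] by (intro mult_left_mono) (auto simp: abs_le_iff)
                moreover have "y e * (U * y e ^ (d + 1)) \<le> U * M * Q"
                proof -
                  have "y e * y e ^ (d + 1) \<le> M * Q" using y0[of e] yM[of e] yQ[of e] M0 by (intro mult_mono) auto
                  thus ?thesis using Upos by (simp add: algebra_simps mult_left_mono)
                qed
                ultimately show ?thesis using True by (simp add: algebra_simps)
              qed
            qed
            also have "\<dots> = Sg + N * (U * M * Q)"
              unfolding Sgy N_def by (simp add: sum.distrib)
            finally show ?thesis .
          qed
          have tot: "Sf \<le> Sg + (A * \<eta> + B * M) * Q"
          proof -
            have "Sf \<le> Sg + (N * (U2 * \<eta> * Q + U * M * Q) + N * ((real d + 1) * (U * M * Q))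
                 + N * (U * (real d + 1) * (N * \<eta> * M) * ((1 + N) ^ d * M ^ d)) + N * (U * M * Q))"
              using SCx E1 E2 E3 by linarith
            also have "N * (U2 * \<eta> * Q + U * M * Q) + N * ((real d + 1) * (U * M * Q))
                 + N * (U * (real d + 1) * (N * \<eta> * M) * ((1 + N) ^ d * M ^ d)) + N * (U * M * Q)
                 = (A * \<eta> + B * M) * Q"
              unfolding A_def B_def QM by (simp add: algebra_simps)
            finally show ?thesis .
          qed
          have "(A * \<eta> + B * M) * Q \<le> \<theta> * Q" using Aeta MB Q0 by (intro mult_right_mono) auto
          also have "\<theta> * Q = \<rho> * (c0 * Q)" unfolding \<theta>_def by simp
          also have "\<dots> \<le> \<rho> * Sf" using SfQ rpos by (intro mult_left_mono) auto
          finally have k: "Sf \<le> Sg + \<rho> * Sf" using tot by linarith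
          hence k2: "(1 - \<rho>) * Sf \<le> Sg" by (simp add: algebra_simps)
          have "Sf \<le> (1 + 2 * \<rho>) * ((1 - \<rho>) * Sf)"
          proof -
            have "(1 + 2 * \<rho>) * ((1 - \<rho>) * Sf) = Sf + \<rho> * (1 - 2 * \<rho>) * Sf" by (simp add: algebra_simps)
            moreover have "0 \<le> \<rho> * (1 - 2 * \<rho>) * Sf" using rpos Sf0 by simp
            ultimately show ?thesis by simp
          qed
          also have "\<dots> \<le> (1 + 2 * \<rho>) * Sg" using k2 rpos by (intro mult_left_mono) auto
          finally show ?thesis .
        qed
        thus "social_cost E P pe c f \<le> (1 + 2 * \<rho>) * social_cost E P pe c g"
          unfolding Sf_def Sg_def .
      qed

    qed
  qed
qed

theorem corollary4p5:
  fixes E :: "'e set" and P :: "'p set" and pe :: "'p \<Rightarrow> 'e set"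
    and cp :: "'e \<Rightarrow> real poly"
  assumes "finite E" and "finite P" and "P \<noteq> {}"
    and "\<forall>p\<in>P. pe p \<subseteq> E"
    and "\<forall>e\<in>E. \<forall>x\<ge>0. poly (cp e) x \<ge> 0"
    and "\<forall>e\<in>E. \<forall>x y. 0 \<le> x \<and> x \<le> y \<longrightarrow> poly (cp e) x \<le> poly (cp e) y"
  shows "\<forall>\<epsilon>>0. \<exists>\<delta>>0. \<forall>M f. 0 < M \<and> M < \<delta> \<and>
            wardrop_eq P pe (\<lambda>e. poly (cp e)) M f \<longrightarrow>
            \<bar>poa E P pe (\<lambda>e. poly (cp e)) M f - 1\<bar> < \<epsilon>"
proof (intro allI impI)
  fix \<epsilon> :: real assume eps: "\<epsilon> > 0"
  let ?c = "\<lambda>e. poly (cp e)"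
  define Z where "Z = {e\<in>E. cp e = 0}"
  have ZE: "Z \<subseteq> E" unfolding Z_def by auto
  have Z0: "\<forall>e\<in>Z. \<forall>x. ?c e x = 0" unfolding Z_def by auto
  have cnn: "\<forall>e\<in>E. \<forall>x\<ge>0. ?c e x \<ge> 0" using assms(5) by simp
  show "\<exists>\<delta>>0. \<forall>M f. 0 < M \<and> M < \<delta> \<and> wardrop_eq P pe ?c M f \<longrightarrow>
            \<bar>poa E P pe ?c M f - 1\<bar> < \<epsilon>"
  proof (cases "\<exists>p\<in>P. pe p - Z = {}")
    case True
    then obtain p0 where p0: "p0 \<in> P" "pe p0 \<subseteq> Z" by blast
    show ?thesis
    proof (intro exI[of _ "1::real"] conjI allI impI)
      fix M f assume Mf: "0 < M \<and> M < 1 \<and> wardrop_eq P pe ?c M f"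
      have ff: "feasible_flow P M f" using Mf unfolding wardrop_eq_def by simp
      have wq: "\<forall>p\<in>P. \<forall>q\<in>P. f p > 0 \<longrightarrow> path_cost P pe ?c f p \<le> path_cost P pe ?c f q"
        using Mf unfolding wardrop_eq_def by simp
      have fnn: "\<forall>p\<in>P. f p \<ge> 0" using ff unfolding feasible_flow_def by simp
      have pc0: "path_cost P pe ?c f p0 = 0" unfolding path_cost_def using p0 Z0 by (simp add: subset_iff)
      have pcnn: "0 \<le> path_cost P pe ?c f p" if "p \<in> P" for p
      proof -
        have l: "\<forall>e. 0 \<le> edge_load P pe f e" using load_nonneg ff by metis
        show ?thesis unfolding path_cost_def
        proof (rule sum_nonneg)
          fix e assume "e \<in> pe p"
          hence "e \<in> E" using that assms(4) by blast
          thus "0 \<le> poly (cp e) (edge_load P pe f e)" using l assms(5) by blast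
        qed
      qed
      have "social_cost E P pe ?c f = (\<Sum>p\<in>P. f p * path_cost P pe ?c f p)"
        by (rule sc_paths[OF assms(1,2,4)])
      also have "\<dots> = 0"
      proof (rule sum.neutral, rule ballI)
        fix p assume pP: "p \<in> P"
        show "f p * path_cost P pe ?c f p = 0"
        proof (cases "f p > 0")
          case True
          hence "path_cost P pe ?c f p \<le> 0" using wq pP p0 pc0 by metis
          thus ?thesis using pcnn[OF pP] by simp
        next
          case False thus ?thesis using fnn pP by (simp add: less_le)
        qed
      qed
      finally have sc0: "social_cost E P pe ?c f = 0" .
      show "\<bar>poa E P pe ?c M f - 1\<bar> < \<epsilon>"
      proof (rule poa_close[OF ff cnn assms(2,3) _ _ _ eps])
        show "0 \<le> M" using Mf by simp
        show "(0::real) \<le> 0" by simp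
        show "\<forall>g. feasible_flow P M g \<longrightarrow> social_cost E P pe ?c f \<le> (1 + 0) * social_cost E P pe ?c g"
        proof (intro allI impI)
          fix g assume fg: "feasible_flow P M g"
          have "0 \<le> social_cost E P pe ?c g" by (rule sc_nonneg[OF fg cnn])
          thus "social_cost E P pe ?c f \<le> (1 + 0) * social_cost E P pe ?c g" using sc0 by simp
        qed
      qed
    qed simp
  next
    case False
    hence allne: "\<forall>p\<in>P. pe p - Z \<noteq> {}" by blast
    have "\<forall>e\<in>E-Z. \<exists>k b K. b > 0 \<and> K \<ge> 0 \<and>
        (\<forall>x. 0 \<le> x \<and> x \<le> 1 \<longrightarrow> \<bar>poly (cp e) x - b * x ^ k\<bar> \<le> K * x ^ (k + 1))"
    proof
      fix e assume e: "e \<in> E - Z"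
      hence "cp e \<noteq> 0" unfolding Z_def by auto
      thus "\<exists>k b K. b > 0 \<and> K \<ge> 0 \<and>
        (\<forall>x. 0 \<le> x \<and> x \<le> 1 \<longrightarrow> \<bar>poly (cp e) x - b * x ^ k\<bar> \<le> K * x ^ (k + 1))"
        using poly_local assms(5) e by blast
    qed
    then obtain kk where "\<forall>e\<in>E-Z. \<exists>b K. b > 0 \<and> K \<ge> 0 \<and>
        (\<forall>x. 0 \<le> x \<and> x \<le> 1 \<longrightarrow> \<bar>poly (cp e) x - b * x ^ kk e\<bar> \<le> K * x ^ (kk e + 1))"
      by (metis bchoice)
    then obtain bb where "\<forall>e\<in>E-Z. \<exists>K. bb e > 0 \<and> K \<ge> 0 \<and>
        (\<forall>x. 0 \<le> x \<and> x \<le> 1 \<longrightarrow> \<bar>poly (cp e) x - bb e * x ^ kk e\<bar> \<le> K * x ^ (kk e + 1))"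
      by (metis bchoice)
    then obtain KK where loc: "\<forall>e\<in>E-Z. bb e > 0 \<and> KK e \<ge> 0 \<and>
        (\<forall>x. 0 \<le> x \<and> x \<le> 1 \<longrightarrow> \<bar>poly (cp e) x - bb e * x ^ kk e\<bar> \<le> KK e * x ^ (kk e + 1))"
      by (metis bchoice)
    define m where "m p = Min (kk ` (pe p - Z))" for p
    define d where "d = Max (m ` P)"
    have finpe: "finite (pe p - Z)" if "p \<in> P" for p
      using that assms(1,4) by (meson finite_Diff rev_finite_subset)
    have "d \<in> m ` P" unfolding d_def using assms(2,3) by (intro Max_in) auto
    then obtain ps where ps: "ps \<in> P" "m ps = d" by auto
    have psd: "\<forall>e\<in>pe ps - Z. d \<le> kk e"
      using ps finpe[OF ps(1)] unfolding m_def by (auto intro: Min_le)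
    have allp: "\<forall>p\<in>P. \<exists>e\<in>pe p - Z. kk e \<le> d"
    proof
      fix p assume pP: "p \<in> P"
      have "m p \<in> kk ` (pe p - Z)" unfolding m_def using finpe[OF pP] allne pP by (intro Min_in) auto
      then obtain e where e: "e \<in> pe p - Z" "kk e = m p" by auto
      have "m p \<le> d" unfolding d_def using pP assms(2) by (intro Max_ge) auto
      thus "\<exists>e\<in>pe p - Z. kk e \<le> d" using e by (metis DiffI DiffD1 DiffD2)
    qed
    show ?thesis
      by (rule main_case[OF assms(1,2,3,4) cnn assms(6) ZE Z0 loc ps(1) psd allp eps])
  qed
qed

end
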